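(* Let $k\ge1$, $n\ge0$, let $m_1,\dots,m_k$ be nonnegative integers and $t_1,\dots,t_{k-1}$ nonnegative integers. There is a bijection between the set of $k$-marked Durfee symbols $\eta$ of $n$ with $\rho_i(\eta)=m_i$ for $1\le i\le k$ and $\mathrm{nb}_i(\eta)=t_i$ for $1\le i\le k-1$, and the set of $k$-marked strict shifted Durfee symbols $\bar\eta$ of $n$ with $\rho_i(\bar\eta)=m_i+2t_i$ for $1\le i\le k-1$ and $\rho_k(\bar\eta)=m_k$.
   Context: A partition is a finite nonincreasing sequence $\lambda=(\lambda_1,\dots,\lambda_r)$ of positive integers (possibly empty); $l(\lambda)=r$, $|\lambda|=\sum\lambda_i$, $\lambda_1$ the largest part. Let $k\ge1$. A $k$-marked Durfee symbol of $n$ is an array $\eta=\begin{pmatrix}\alpha^k,&\dots,&\alpha^1\\ \beta^k,&\dots,&\beta^1\end{pmatrix}_D$ consisting of an integer $D\ge0$ and $2k$ partitions $\alpha^i,\beta^i$ with $\sum_{i=1}^k(|\alpha^i|+|\beta^i|)+D^2=n$, such that: (1) $\alpha^i$ is nonempty for $1\le i<k$; (2) for $1\le i<k$ every part of $\beta^i$ is $\le\alpha^i_1$, and for $2\le i\le k$ every part of $\alpha^i$ and every part of $\beta^i$ is $\ge\alpha^{i-1}_1$; (3) all parts of $\alpha^k$ and $\beta^k$ are $\le D$. The pair $(\alpha^i,\beta^i)$ is the $i$th vector. The $i$th rank is $\rho_i(\eta)=l(\alpha^i)-l(\beta^i)-1$ for $1\le i<k$ and $\rho_k(\eta)=l(\alpha^k)-l(\beta^k)$.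 A pair of partitions $(\alpha,\beta)$ is strict shifted if $l(\alpha)>l(\beta)$ and $\alpha_{i+1}>\beta_i$ for $1\le i\le l(\beta)$. A $k$-marked Durfee symbol is strict shifted if each of its vectors $(\alpha^i,\beta^i)$ with $1\le i\le k-1$ is strict shifted. Balanced parts: for a pair of partitions $(\gamma,\delta)$, with the convention $\gamma_j=0$ for $j>l(\gamma)$, the parts $\delta_1,\dots,\delta_{l(\delta)}$ are classified recursively in increasing order of index: $\delta_i$ is balanced iff $\gamma_{i+1}\le\delta_i$ and the number of indices $j$ with $2\le j\le l(\gamma)$ and $\gamma_j>\delta_i$ equals the number of indices $j<i$ for which $\delta_j$ is unbalanced. $b(\gamma,\delta)$ is the number of balanced parts. The $i$th balanced number of a $k$-marked Durfee symbol $\eta$ is $\mathrm{nb}_i(\eta)=b(\alpha^i,\beta^i)$ for $1\le i<k$ and $\mathrm{nb}_k(\eta)=0$. *)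

theory Defs
  imports Main
begin

definition is_partition :: "nat list \<Rightarrow> bool" where
  "is_partition xs \<longleftrightarrow> sorted_wrt (\<ge>) xs \<and> (\<forall>x\<in>set xs. 0 < x)"

(* 1-indexed part with convention gamma_j = 0 for j > l(gamma) *)
definition part :: "nat list \<Rightarrow> nat \<Rightarrow> nat" where
  "part xs j = (if 1 \<le> j \<and> j \<le> length xs then xs ! (j - 1) else 0)"

(* A k-marked Durfee symbol is represented as (D, [alpha^1,...,alpha^k], [beta^1,...,beta^k]) *)
type_synonym durfee = "nat \<times> nat list list \<times> nat list list"

definition dD :: "durfee \<Rightarrow> nat" where "dD \<eta> = fst \<eta>"
definition alpha :: "durfee \<Rightarrow> nat \<Rightarrow> nat list" where "alpha \<eta> i = fst (snd \<eta>) ! (i - 1)"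
definition beta :: "durfee \<Rightarrow> nat \<Rightarrow> nat list" where "beta \<eta> i = snd (snd \<eta>) ! (i - 1)"

definition is_kmds :: "nat \<Rightarrow> nat \<Rightarrow> durfee \<Rightarrow> bool" where
  "is_kmds k n \<eta> \<longleftrightarrow>
     length (fst (snd \<eta>)) = k \<and> length (snd (snd \<eta>)) = k \<and>
     (\<forall>i\<in>{1..k}. is_partition (alpha \<eta> i) \<and> is_partition (beta \<eta> i)) \<and>
     (\<Sum>i=1..k. sum_list (alpha \<eta> i) + sum_list (beta \<eta> i)) + (dD \<eta>)\<^sup>2 = n \<and>
     (\<forall>i\<in>{1..<k}. alpha \<eta> i \<noteq> []) \<and>
     (\<forall>i\<in>{1..<k}. \<forall>x\<in>set (beta \<eta> i). x \<le> part (alpha \<eta> i) 1) \<and>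
     (\<forall>i\<in>{2..k}. \<forall>x\<in>set (alpha \<eta> i) \<union> set (beta \<eta> i). part (alpha \<eta> (i - 1)) 1 \<le> x) \<and>
     (\<forall>x\<in>set (alpha \<eta> k) \<union> set (beta \<eta> k). x \<le> dD \<eta>)"

definition rank :: "nat \<Rightarrow> durfee \<Rightarrow> nat \<Rightarrow> int" where
  "rank k \<eta> i = (if i < k
     then int (length (alpha \<eta> i)) - int (length (beta \<eta> i)) - 1
     else int (length (alpha \<eta> i)) - int (length (beta \<eta> i)))"

definition strict_shifted_pair :: "nat list \<Rightarrow> nat list \<Rightarrow> bool" where
  "strict_shifted_pair a b \<longleftrightarrow> length b < length a \<and>
     (\<forall>i. 1 \<le> i \<and> i \<le> length b \<longrightarrow> part a (i + 1) > part b i)"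

definition strict_shifted :: "nat \<Rightarrow> durfee \<Rightarrow> bool" where
  "strict_shifted k \<eta> \<longleftrightarrow> (\<forall>i\<in>{1..<k}. strict_shifted_pair (alpha \<eta> i) (beta \<eta> i))"

(* Balanced parts.  bal_aux g i u ds: ds = remaining parts delta_i, delta_{i+1}, ...
   (1-indexed i), u = number of unbalanced parts among delta_1..delta_{i-1};
   returns the number of balanced parts among ds. *)
fun bal_aux :: "nat list \<Rightarrow> nat \<Rightarrow> nat \<Rightarrow> nat list \<Rightarrow> nat" where
  "bal_aux g i u [] = 0"
| "bal_aux g i u (d # ds) =
     (if part g (i + 1) \<le> d \<and> card {j. 2 \<le> j \<and> j \<le> length g \<and> part g j > d} = u
      then Suc (bal_aux g (Suc i) u ds)
      else bal_aux g (Suc i) (Suc u) ds)"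

definition balanced_count :: "nat list \<Rightarrow> nat list \<Rightarrow> nat" where
  "balanced_count g d = bal_aux g 1 0 d"

definition nb :: "nat \<Rightarrow> durfee \<Rightarrow> nat \<Rightarrow> nat" where
  "nb k \<eta> i = (if i < k then balanced_count (alpha \<eta> i) (beta \<eta> i) else 0)"

end

theory Submission
  imports Defs "HOL-Library.Multiset"
begin

definition cg :: "nat list \<Rightarrow> nat \<Rightarrow> nat" where
  "cg g d = length (filter (\<lambda>x. d < x) (tl g))"

fun bal2 :: "nat list \<Rightarrow> nat \<Rightarrow> nat list \<Rightarrow> nat" where
  "bal2 g u [] = 0"
| "bal2 g u (d # ds) = (if cg g d = u then Suc (bal2 g u ds) else bal2 g (Suc u) ds)"

lemma sorted_filter_nth:
  assumes "sorted_wrt (\<ge>) xs" "length (filter (\<lambda>x. d < x) xs) = u" "u < length xs"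
  shows "xs ! u \<le> (d::nat)"
  using assms
proof (induction xs arbitrary: u)
  case Nil then show ?case by simp
next
  case (Cons x xs)
  show ?case
  proof (cases u)
    case 0
    then show ?thesis using Cons.prems by (auto simp: filter_empty_conv split: if_splits)
  next
    case (Suc u')
    show ?thesis
    proof (cases "d < x")
      case True
      then show ?thesis using Cons Suc by auto
    next
      case False
      then have "filter (\<lambda>x. d < x) xs = []" using Cons.prems(1)
        by (auto simp: filter_empty_conv)
      then show ?thesis using Cons.prems False Suc by simp
    qed
  qed
qed

lemma card_part_gt:
  "card {j. 2 \<le> j \<and> j \<le> length g \<and> Defs.part g j > d} = cg g d"
proof -
  have "{j. 2 \<le> j \<and> j \<le> length g \<and> Defs.part g j > d} = (\<lambda>i. i + 2) ` {i. i < length (tl g) \<and> d < tl g ! i}"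
  proof (rule set_eqI, rule iffI)
    fix j assume "j \<in> {j. 2 \<le> j \<and> j \<le> length g \<and> Defs.part g j > d}"
    then have j: "2 \<le> j" "j \<le> length g" "Defs.part g j > d" by auto
    then have "g ! (j - 1) = tl g ! (j - 2)" by (cases g) (auto simp: nth_Cons' numeral_2_eq_2)
    then show "j \<in> (\<lambda>i. i + 2) ` {i. i < length (tl g) \<and> d < tl g ! i}"
      using j by (auto simp: Defs.part_def image_iff intro!: exI[of _ "j - 2"])
  next
    fix j assume "j \<in> (\<lambda>i. i + 2) ` {i. i < length (tl g) \<and> d < tl g ! i}"
    then obtain i where "j = i + 2" "i < length (tl g)" "d < tl g ! i" by auto
    then show "j \<in> {j. 2 \<le> j \<and> j \<le> length g \<and> Defs.part g j > d}"
      by (cases g) (auto simp: Defs.part_def)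
  qed
  then have "card {j. 2 \<le> j \<and> j \<le> length g \<and> Defs.part g j > d} = card {i. i < length (tl g) \<and> d < tl g ! i}"
    by (simp add: card_image inj_on_def)
  then show ?thesis by (simp add: cg_def length_filter_conv_card)
qed

lemma bal_aux_bal2:
  assumes "sorted_wrt (\<ge>) g" "u < i"
  shows "bal_aux g i u ds = bal2 g u ds"
  using assms(2)
proof (induction ds arbitrary: i u)
  case Nil then show ?case by simp
next
  case (Cons d ds)
  have key: "cg g d = u \<Longrightarrow> Defs.part g (i + 1) \<le> d"
  proof -
    assume c: "cg g d = u"
    show "Defs.part g (i + 1) \<le> d"
    proof (cases "i + 1 \<le> length g")
      case False then show ?thesis by (simp add: Defs.part_def)
    next
      case True
      have st: "sorted_wrt (\<ge>) (tl g)" using assms(1) by (cases g) auto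
      have ul: "u < length (tl g)" using True Cons.prems by simp
      have "tl g ! u \<le> d" using sorted_filter_nth[OF st _ ul] c by (simp add: cg_def)
      moreover have "g ! i \<le> tl g ! u"
      proof -
        have "tl g ! u = g ! (Suc u)" using ul by (cases g) auto
        moreover have "g ! i \<le> g ! (Suc u)"
        proof (cases "i = Suc u")
          case True then show ?thesis by simp
        next
          case False
          then have "Suc u < i" using Cons.prems by simp
          then show ?thesis using assms(1) True by (simp add: sorted_wrt_iff_nth_less)
        qed
        ultimately show ?thesis by simp
      qed
      ultimately show ?thesis using True by (simp add: Defs.part_def)
    qed
  qed
  show ?case
  proof (cases "cg g d = u")
    case True
    then have "bal_aux g (Suc i) u ds = bal2 g u ds" using Cons.IH[of u "Suc i"] Cons.prems by simp
    then show ?thesis using True key by (simp add: card_part_gt)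
  next
    case False
    then have "bal_aux g (Suc i) (Suc u) ds = bal2 g (Suc u) ds" using Cons.IH[of "Suc u" "Suc i"] Cons.prems by simp
    then show ?thesis using False by (simp add: card_part_gt)
  qed
qed

lemma bal2_le: "bal2 g u ds \<le> length ds"
  by (induction ds arbitrary: u) (auto simp: le_SucI)

lemma bal2_append:
  "bal2 g u (xs @ ys) = bal2 g u xs + bal2 g (u + length xs - bal2 g u xs) ys"
proof (induction xs arbitrary: u)
  case Nil then show ?case by simp
next
  case (Cons x xs)
  have le1: "bal2 g u xs \<le> length xs" "bal2 g (Suc u) xs \<le> length xs" by (rule bal2_le)+
  show ?case using Cons.IH[of u] Cons.IH[of "Suc u"] le1
    by (auto simp: Suc_diff_le)
qed

lemma bal2_cong:
  "(\<forall>d\<in>set ds. cg g d = cg g' d) \<Longrightarrow> bal2 g u ds = bal2 g' u ds"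
  by (induction ds arbitrary: u) auto

lemma bal2_rep:
  assumes "cg g v = K"
  shows "bal2 g u (replicate j v) = (if u \<le> K then j - (K - u) else 0)"
  using assms
proof (induction j arbitrary: u)
  case 0 then show ?case by simp
next
  case (Suc j)
  show ?case
  proof (cases "K = u")
    case True
    then show ?thesis using Suc by simp
  next
    case False
    then show ?thesis using Suc.IH[of "Suc u"] Suc.prems by auto
  qed
qed

lemma cg_le: "cg g d \<le> length (tl g)"
  unfolding cg_def by (rule length_filter_le)

lemma length_filter_mono': "(\<And>x. P x \<Longrightarrow> Q x) \<Longrightarrow> length (filter P xs) \<le> length (filter Q xs)"
  by (induction xs) auto

lemma cg_anti: "d' \<le> d \<Longrightarrow> cg g d \<le> cg g d'"
  unfolding cg_def by (rule length_filter_mono') auto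

lemma bal2_inv:
  assumes "sorted_wrt (\<ge>) ds" "ds \<noteq> [] \<Longrightarrow> u \<le> cg g (hd ds)"
  shows "u + length ds - bal2 g u ds \<le> max u (length (tl g))"
  using assms
proof (induction ds arbitrary: u)
  case Nil then show ?case by simp
next
  case (Cons d ds)
  have ud: "u \<le> cg g d" using Cons.prems by simp
  have nxt: "ds \<noteq> [] \<Longrightarrow> cg g d \<le> cg g (hd ds)"
    using Cons.prems(1) by (cases ds) (auto intro: cg_anti)
  have bl: "bal2 g u ds \<le> length ds" "bal2 g (Suc u) ds \<le> length ds" by (rule bal2_le)+
  show ?case
  proof (cases "cg g d = u")
    case True
    have "u + length ds - bal2 g u ds \<le> max u (length (tl g))"
      using Cons.IH[of u] Cons.prems(1) nxt True by auto
    then show ?thesis using True bl by auto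
  next
    case False
    then have "Suc u \<le> cg g d" using ud by simp
    then have "Suc u + length ds - bal2 g (Suc u) ds \<le> max (Suc u) (length (tl g))"
      using Cons.IH[of "Suc u"] Cons.prems(1) nxt by fastforce
    moreover have "Suc u \<le> length (tl g)" using \<open>Suc u \<le> cg g d\<close> cg_le[of g d] by simp
    ultimately show ?thesis using False bl by auto
  qed
qed

lemma split_part:
  assumes "sorted_wrt (\<ge>) a" "\<forall>x\<in>set a. v \<le> (x::nat)"
  shows "a = filter (\<lambda>x. v < x) a @ replicate (count (mset a) v) v"
  using assms
proof (induction a)
  case Nil then show ?case by simp
next
  case (Cons x xs)
  show ?case
  proof (cases "v < x")
    case True
    then show ?thesis using Cons by auto
  next
    case False
    then have xv: "x = v" using Cons.prems by auto
    then have "\<forall>y\<in>set xs. y = v" using Cons.prems by force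
    then have "xs = replicate (length xs) v" by (simp add: replicate_length_same)
    moreover have "filter (\<lambda>x. v < x) xs = []" using \<open>\<forall>y\<in>set xs. y = v\<close> by (auto simp: filter_empty_conv)
    moreover have "count (mset xs) v = length xs" using \<open>\<forall>y\<in>set xs. y = v\<close>
      by (metis \<open>xs = replicate (length xs) v\<close> count_replicate_mset mset_replicate)
    ultimately show ?thesis using xv by simp
  qed
qed

lemma is_partition_filter: "is_partition a \<Longrightarrow> is_partition (filter P a)"
  by (auto simp: is_partition_def sorted_wrt_filter)

lemma sorted_rep: "sorted_wrt (\<ge>) (replicate n (v::nat))"
  by (induction n) auto

lemma is_partition_app_rep:
  assumes "is_partition a" "\<forall>x\<in>set a. v < x" "0 < v"
  shows "is_partition (a @ replicate n v)"
  using assms sorted_rep[of n v] by (auto simp: is_partition_def sorted_wrt_append less_imp_le)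

definition PP :: "nat multiset \<Rightarrow> (nat list \<times> nat list) set" where
  "PP M = {(a,b). is_partition a \<and> is_partition b \<and> a \<noteq> [] \<and> (\<forall>x\<in>set b. x \<le> hd a) \<and> mset a + mset b = M}"
definition SSP :: "nat multiset \<Rightarrow> (nat list \<times> nat list) set" where
  "SSP M = {(a,b). is_partition a \<and> is_partition b \<and> strict_shifted_pair a b \<and> mset a + mset b = M}"
definition LS :: "nat multiset \<Rightarrow> nat \<Rightarrow> nat \<Rightarrow> (nat list \<times> nat list) set" where
  "LS M E T = {(a,b). (a,b) \<in> PP M \<and> bal2 a 0 b = T \<and> length a + T = E + 1 + length b}"
definition RS :: "nat multiset \<Rightarrow> nat \<Rightarrow> (nat list \<times> nat list) set" where
  "RS M H = {(a,b). (a,b) \<in> SSP M \<and> length a = H + 1 + length b}"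
definition ext :: "nat \<Rightarrow> nat \<Rightarrow> nat \<Rightarrow> nat list \<times> nat list \<Rightarrow> nat list \<times> nat list" where
  "ext v c j p = (fst p @ replicate (c - j) v, snd p @ replicate j v)"

lemma decomp:
  assumes "is_partition a" "is_partition b" "mset a + mset b = M' + replicate_mset c v" "\<forall>x\<in>#M'. v < x"
  shows "(a,b) = ext v c (count (mset b) v) (filter (\<lambda>x. v<x) a, filter (\<lambda>x. v<x) b)"
    "mset (filter (\<lambda>x. v<x) a) + mset (filter (\<lambda>x. v<x) b) = M'"
    "count (mset b) v \<le> c"
proof -
  have ge: "\<forall>x\<in>set a. v \<le> x" "\<forall>x\<in>set b. v \<le> x"
  proof -
    have "set a \<subseteq> set_mset (M' + replicate_mset c v)" "set b \<subseteq> set_mset (M' + replicate_mset c v)"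
      using assms(3) by (metis Un_iff set_mset_mset set_mset_union subsetI)+
    then show "\<forall>x\<in>set a. v \<le> x" "\<forall>x\<in>set b. v \<le> x" using assms(4)
      by (auto dest!: subsetD simp: less_imp_le split: if_splits)
  qed
  have cnt: "count (mset a) v + count (mset b) v = c"
  proof -
    have "count (mset a + mset b) v = count (M' + replicate_mset c v) v" using assms(3) by simp
    moreover have "count M' v = 0" using assms(4) by (meson count_inI less_irrefl)
    ultimately show ?thesis by simp
  qed
  show "count (mset b) v \<le> c" using cnt by simp
  have sa: "a = filter (\<lambda>x. v < x) a @ replicate (count (mset a) v) v"
    using split_part assms(1) ge(1) by (simp add: is_partition_def)
  have sb: "b = filter (\<lambda>x. v < x) b @ replicate (count (mset b) v) v"
    using split_part assms(2) ge(2) by (simp add: is_partition_def)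
  have "count (mset a) v = c - count (mset b) v" using cnt by simp
  then show "(a,b) = ext v c (count (mset b) v) (filter (\<lambda>x. v<x) a, filter (\<lambda>x. v<x) b)"
    using sa sb unfolding ext_def by (metis fst_conv snd_conv)
  have "filter_mset (\<lambda>x. v < x) (mset a + mset b) = filter_mset (\<lambda>x. v < x) (M' + replicate_mset c v)"
    using assms(3) by simp
  also have "\<dots> = M'"
  proof -
    have "filter_mset (\<lambda>x. v < x) M' = M'" using assms(4) by (simp add: filter_mset_eq_conv)
    moreover have "filter_mset (\<lambda>x. v < x) (replicate_mset c v) = {#}" by (induction c) auto
    ultimately show ?thesis by simp
  qed
  finally show "mset (filter (\<lambda>x. v<x) a) + mset (filter (\<lambda>x. v<x) b) = M'" by simp
qed

lemma ext_filter:
  assumes "\<forall>x\<in>set (fst p). v < x" "\<forall>x\<in>set (snd p). v < x"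
  shows "filter (\<lambda>x. v<x) (fst (ext v c j p)) = fst p"
    "filter (\<lambda>x. v<x) (snd (ext v c j p)) = snd p"
    "count (mset (snd (ext v c j p))) v = j"
  using assms by (auto simp: ext_def filter_id_conv count_eq_zero_iff)

lemma ext_inj:
  assumes "\<forall>x\<in>set (fst p). v < x" "\<forall>x\<in>set (snd p). v < x"
    "\<forall>x\<in>set (fst q). v < x" "\<forall>x\<in>set (snd q). v < x"
    "ext v c j p = ext v c j' q"
  shows "j = j'" "p = q"
proof -
  show "j = j'" using ext_filter(3)[OF assms(1,2), of c j] ext_filter(3)[OF assms(3,4), of c j'] assms(5) by simp
  show "p = q" using ext_filter(1,2)[OF assms(1,2), of c j] ext_filter(1,2)[OF assms(3,4), of c j'] assms(5)
    by (metis prod.exhaust_sel)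
qed

lemma ext_mset:
  "j \<le> c \<Longrightarrow> mset (fst (ext v c j p)) + mset (snd (ext v c j p)) = mset (fst p) + mset (snd p) + replicate_mset c v"
proof -
  assume "j \<le> c"
  have "replicate_mset (c - j) v + replicate_mset j v = replicate_mset c v"
    using \<open>j \<le> c\<close> by (intro multiset_eqI) auto
  then show ?thesis by (simp add: ext_def algebra_simps)
qed

lemma PP_inv:
  assumes "(a,b) \<in> PP M"
  shows "Suc (length b) \<le> length a + bal2 a 0 b"
proof -
  have sb: "sorted_wrt (\<ge>) b" using assms by (simp add: PP_def is_partition_def)
  have "0 + length b - bal2 a 0 b \<le> max 0 (length (tl a))"
    by (rule bal2_inv[OF sb]) simp
  moreover have "a \<noteq> []" using assms by (simp add: PP_def)
  moreover have "bal2 a 0 b \<le> length b" by (rule bal2_le)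
  moreover have "length a = Suc (length (tl a))" using \<open>a \<noteq> []\<close> by simp
  ultimately show ?thesis by linarith
qed

definition stE :: "nat list \<Rightarrow> nat list \<Rightarrow> nat" where
  "stE a b = length a + bal2 a 0 b - Suc (length b)"

lemma mset_gt:
  assumes "mset a + mset b = M'" "\<forall>x\<in>#M'. v < x"
  shows "\<forall>x\<in>set a. v < x" "\<forall>x\<in>set b. v < x"
  using assms by auto

lemma cg_app_rep:
  assumes "a \<noteq> []" "v < d"
  shows "cg (a @ replicate n v) d = cg a d"
  using assms by (simp add: cg_def)

lemma cg_app_rep_v:
  assumes "a \<noteq> []" "\<forall>x\<in>set a. v < x"
  shows "cg (a @ replicate n v) v = length a - 1"
proof -
  have "filter (\<lambda>x. v < x) (tl a) = tl a" using assms by (auto simp: filter_id_conv dest: list.set_sel(2))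
  then show ?thesis using assms by (simp add: cg_def)
qed

locale stepctx =
  fixes v c :: nat and M' :: "nat multiset"
  assumes ne: "M' \<noteq> {#}" and gt: "\<forall>x\<in>#M'. v < x" and vpos: "0 < v"
begin

abbreviation "M \<equiv> M' + replicate_mset c v"

lemma PP_ext:
  assumes "p \<in> PP M'" "j \<le> c"
  shows "ext v c j p \<in> PP M"
proof -
  obtain a b where p: "p = (a,b)" by fastforce
  have pa: "is_partition a" "is_partition b" "a \<noteq> []" "\<forall>x\<in>set b. x \<le> hd a" "mset a + mset b = M'"
    using assms p by (auto simp: PP_def)
  have g: "\<forall>x\<in>set a. v < x" "\<forall>x\<in>set b. v < x" using mset_gt[OF pa(5) gt] by auto
  show ?thesis
    using is_partition_app_rep[OF pa(1) g(1) vpos, of "c - j"] is_partition_app_rep[OF pa(2) g(2) vpos, of j]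
      pa(3,4) ext_mset[OF assms(2), of v p] p pa(5) g(1) pa(3)
    by (auto simp: PP_def ext_def less_imp_le intro: order.trans[of _ v "hd a"])
qed

lemma PP_dec:
  assumes "(a,b) \<in> PP M"
  shows "\<exists>j p. j \<le> c \<and> p \<in> PP M' \<and> (a,b) = ext v c j p"
proof -
  have pa: "is_partition a" "is_partition b" "a \<noteq> []" "\<forall>x\<in>set b. x \<le> hd a" "mset a + mset b = M"
    using assms by (auto simp: PP_def)
  define a' where "a' = filter (\<lambda>x. v<x) a"
  define b' where "b' = filter (\<lambda>x. v<x) b"
  define j where "j = count (mset b) v"
  have d: "(a,b) = ext v c j (a', b')" "mset a' + mset b' = M'" "j \<le> c"
    using decomp[OF pa(1,2,5) gt] unfolding a'_def b'_def j_def by auto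
  have ea: "a = a' @ replicate (c - j) v" using d(1) by (simp add: ext_def)
  have a'ne: "a' \<noteq> []"
  proof
    assume a'e: "a' = []"
    obtain x where "x \<in># M'" using ne by fastforce
    then have "x \<in> set b'" using d(2) a'e by auto
    then have "v < x" "x \<in> set b" unfolding b'_def by auto
    moreover have "hd a = v" using ea a'e pa(3) by (cases "c - j") auto
    ultimately show False using pa(4) by fastforce
  qed
  have hd: "hd a = hd a'" using ea a'ne by simp
  have "(a', b') \<in> PP M'"
    using pa d(2) a'ne hd unfolding a'_def b'_def PP_def by (auto simp: is_partition_filter)
  then show ?thesis using d by blast
qed

lemma bal_ext:
  assumes "(a',b') \<in> PP M'"
  shows "bal2 (fst (ext v c j (a',b'))) 0 (snd (ext v c j (a',b'))) = bal2 a' 0 b' + (j - stE a' b')"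
proof -
  have pa: "a' \<noteq> []" "mset a' + mset b' = M'" using assms by (auto simp: PP_def)
  have g: "\<forall>x\<in>set a'. v < x" "\<forall>x\<in>set b'. v < x" using mset_gt[OF pa(2) gt] by auto
  define a where "a = a' @ replicate (c - j) v"
  have e: "ext v c j (a',b') = (a, b' @ replicate j v)" by (simp add: ext_def a_def)
  have b1: "bal2 a 0 b' = bal2 a' 0 b'"
    by (rule bal2_cong) (use g pa in \<open>auto simp: a_def cg_app_rep\<close>)
  have cgv: "cg a v = length a' - 1" unfolding a_def by (rule cg_app_rep_v[OF pa(1) g(1)])
  have inv: "Suc (length b') \<le> length a' + bal2 a' 0 b'" by (rule PP_inv[OF assms])
  have bl: "bal2 a' 0 b' \<le> length b'" by (rule bal2_le)
  have U: "0 + length b' - bal2 a 0 b' \<le> length a' - 1" using b1 inv bl by simp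
  have "bal2 a 0 (b' @ replicate j v) = bal2 a 0 b' + bal2 a (0 + length b' - bal2 a 0 b') (replicate j v)"
    by (rule bal2_append)
  also have "\<dots> = bal2 a' 0 b' + (j - stE a' b')"
    using bal2_rep[OF cgv, of "0 + length b' - bal2 a 0 b'" j] U b1 inv bl
    by (simp add: stE_def)
  finally show ?thesis using e by simp
qed

end

lemma ssp_alt:
  "strict_shifted_pair a b \<longleftrightarrow> length b < length a \<and> (\<forall>i<length b. b ! i < a ! Suc i)"
proof
  assume s: "strict_shifted_pair a b"
  then have l: "length b < length a" by (simp add: strict_shifted_pair_def)
  have "\<forall>i<length b. b ! i < a ! Suc i"
  proof (intro allI impI)
    fix i assume i: "i < length b"
    have "Defs.part a (Suc i + 1) > Defs.part b (Suc i)" using s i by (simp add: strict_shifted_pair_def)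
    then show "b ! i < a ! Suc i" using i l by (simp add: Defs.part_def split: if_splits)
  qed
  then show "length b < length a \<and> (\<forall>i<length b. b ! i < a ! Suc i)" using l by simp
next
  assume r: "length b < length a \<and> (\<forall>i<length b. b ! i < a ! Suc i)"
  show "strict_shifted_pair a b" unfolding strict_shifted_pair_def
  proof (intro conjI allI impI)
    show "length b < length a" using r by simp
    fix i assume i: "1 \<le> i \<and> i \<le> length b"
    then obtain k where k: "i = Suc k" "k < length b" by (cases i) auto
    then show "Defs.part b i < Defs.part a (i + 1)" using r by (simp add: Defs.part_def)
  qed
qed

lemma ssp_ext:
  assumes ga: "\<forall>x\<in>set a'. v < x" and gb: "\<forall>x\<in>set b'. v < (x::nat)" and ne: "a' \<noteq> [] \<or> b' \<noteq> []"
  shows "strict_shifted_pair (a' @ replicate n v) (b' @ replicate j v) \<longleftrightarrow>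
         strict_shifted_pair a' b' \<and> j + 1 + length b' \<le> length a'"
proof
  let ?A = "a' @ replicate n v" and ?B = "b' @ replicate j v"
  assume s: "strict_shifted_pair ?A ?B"
  then have l: "length ?B < length ?A" and c: "\<forall>i<length ?B. ?B ! i < ?A ! Suc i" by (auto simp: ssp_alt)
  have K: "Suc i < length a'" if i: "i < length ?B" for i
  proof (rule ccontr)
    assume "\<not> Suc i < length a'"
    then have "?A ! Suc i = v" using l i by (simp add: nth_append)
    moreover have "v \<le> ?B ! i" using i gb by (auto simp: nth_append less_imp_le dest: nth_mem)
    ultimately show False using c i by fastforce
  qed
  have len: "j + 1 + length b' \<le> length a'"
  proof (cases "length ?B")
    case 0
    then have "b' = []" "j = 0" by auto
    then show ?thesis using ne by (cases a') auto
  next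
    case (Suc m)
    then show ?thesis using K[of m] by simp
  qed
  have "\<forall>i<length b'. b' ! i < a' ! Suc i"
  proof (intro allI impI)
    fix i assume i: "i < length b'"
    then have "?B ! i < ?A ! Suc i" using c by simp
    moreover have "Suc i < length a'" using K[of i] i by simp
    ultimately show "b' ! i < a' ! Suc i" using i by (simp add: nth_append)
  qed
  then show "strict_shifted_pair a' b' \<and> j + 1 + length b' \<le> length a'" using len by (simp add: ssp_alt)
next
  let ?A = "a' @ replicate n v" and ?B = "b' @ replicate j v"
  assume r: "strict_shifted_pair a' b' \<and> j + 1 + length b' \<le> length a'"
  then have c: "\<forall>i<length b'. b' ! i < a' ! Suc i" and len: "j + 1 + length b' \<le> length a'"
    by (auto simp: ssp_alt)
  have "\<forall>i<length ?B. ?B ! i < ?A ! Suc i"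
  proof (intro allI impI)
    fix i assume i: "i < length ?B"
    then have si: "Suc i < length a'" using len by simp
    show "?B ! i < ?A ! Suc i"
    proof (cases "i < length b'")
      case True then show ?thesis using c si by (simp add: nth_append)
    next
      case False
      then have "?B ! i = v" using i by (simp add: nth_append)
      moreover have "v < a' ! Suc i" using ga si by simp
      ultimately show ?thesis using si by (simp add: nth_append)
    qed
  qed
  moreover have "length ?B < length ?A" using len by simp
  ultimately show "strict_shifted_pair ?A ?B" by (simp add: ssp_alt)
qed

context stepctx
begin

definition IL :: "nat \<Rightarrow> nat \<Rightarrow> (nat \<times> nat \<times> nat) set" where
  "IL E T = {(j,e,t). j \<le> c \<and> t + (j - e) = T \<and> (c - j) + (e - j) = E}"
definition IR :: "nat \<Rightarrow> (nat \<times> nat) set" where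
  "IR H = {(j,h). j \<le> c \<and> j \<le> h \<and> h + c = H + 2 * j}"

lemma LS_eq: "LS M E T = (\<Union>(j,e,t)\<in>IL E T. ext v c j ` LS M' e t)"
proof (rule set_eqI, rule iffI)
  fix x assume x: "x \<in> LS M E T"
  obtain a b where ab: "x = (a,b)" by fastforce
  have xp: "(a,b) \<in> PP M" "bal2 a 0 b = T" "length a + T = E + 1 + length b"
    using x ab by (auto simp: LS_def)
  obtain j p where jp: "j \<le> c" "p \<in> PP M'" "(a,b) = ext v c j p" using PP_dec[OF xp(1)] by blast
  obtain a' b' where p: "p = (a',b')" by fastforce
  define e where "e = stE a' b'"
  define t where "t = bal2 a' 0 b'"
  have inv: "Suc (length b') \<le> length a' + t" using PP_inv jp(2) p t_def by simp
  have bal: "T = t + (j - e)" using bal_ext[of a' b' j] jp p xp(2) e_def t_def by (metis fst_conv snd_conv)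
  have la: "length a = length a' + (c - j)" "length b = length b' + j" using jp(3) p by (auto simp: ext_def)
  have le: "length a' + t = e + 1 + length b'" using inv e_def t_def by (simp add: stE_def)
  have "(j,e,t) \<in> IL E T" using bal la le xp(3) jp(1) unfolding IL_def by auto
  moreover have "p \<in> LS M' e t" using jp(2) p le t_def by (simp add: LS_def)
  ultimately show "x \<in> (\<Union>(j,e,t)\<in>IL E T. ext v c j ` LS M' e t)" using jp ab by blast
next
  fix x assume "x \<in> (\<Union>(j,e,t)\<in>IL E T. ext v c j ` LS M' e t)"
  then obtain j e t p where jet: "(j,e,t) \<in> IL E T" "p \<in> LS M' e t" "x = ext v c j p" by blast
  obtain a' b' where p: "p = (a',b')" by fastforce
  have pp: "(a',b') \<in> PP M'" "bal2 a' 0 b' = t" "length a' + t = e + 1 + length b'"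
    using jet(2) p by (auto simp: LS_def)
  have se: "stE a' b' = e" using pp by (simp add: stE_def)
  have jc: "j \<le> c" "t + (j - e) = T" "(c - j) + (e - j) = E" using jet(1) by (auto simp: IL_def)
  have inPP: "x \<in> PP M" using PP_ext[OF pp(1) jc(1)] jet(3) p by simp
  have bal: "bal2 (fst x) 0 (snd x) = T" using bal_ext[OF pp(1), of j] jet(3) p se pp(2) jc(2) by simp
  have "length (fst x) + T = E + 1 + length (snd x)"
    using jet(3) p pp(3) jc by (auto simp: ext_def)
  then show "x \<in> LS M E T" using inPP bal by (cases x) (simp add: LS_def)
qed

lemma SSP_ext:
  assumes "p \<in> SSP M'" "j \<le> c" "j + 1 + length (snd p) \<le> length (fst p)"
  shows "ext v c j p \<in> SSP M"
proof -
  obtain a b where p: "p = (a,b)" by fastforce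
  have pa: "is_partition a" "is_partition b" "strict_shifted_pair a b" "mset a + mset b = M'"
    using assms p by (auto simp: SSP_def)
  have g: "\<forall>x\<in>set a. v < x" "\<forall>x\<in>set b. v < x" using mset_gt[OF pa(4) gt] by auto
  have nab: "a \<noteq> [] \<or> b \<noteq> []" using pa(4) ne by auto
  show ?thesis
    using is_partition_app_rep[OF pa(1) g(1) vpos, of "c - j"] is_partition_app_rep[OF pa(2) g(2) vpos, of j]
      ssp_ext[OF g nab, of "c - j" j] pa(3) assms(3) p ext_mset[OF assms(2), of v p] pa(4)
    by (simp add: SSP_def ext_def)
qed

lemma SSP_dec:
  assumes "(a,b) \<in> SSP M"
  shows "\<exists>j p. j \<le> c \<and> p \<in> SSP M' \<and> (a,b) = ext v c j p \<and> j + 1 + length (snd p) \<le> length (fst p)"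
proof -
  have pa: "is_partition a" "is_partition b" "strict_shifted_pair a b" "mset a + mset b = M"
    using assms by (auto simp: SSP_def)
  define a' where "a' = filter (\<lambda>x. v<x) a"
  define b' where "b' = filter (\<lambda>x. v<x) b"
  define j where "j = count (mset b) v"
  have d: "(a,b) = ext v c j (a', b')" "mset a' + mset b' = M'" "j \<le> c"
    using decomp[OF pa(1,2,4) gt] unfolding a'_def b'_def j_def by auto
  have g: "\<forall>x\<in>set a'. v < x" "\<forall>x\<in>set b'. v < x" using mset_gt[OF d(2) gt] by auto
  have nab: "a' \<noteq> [] \<or> b' \<noteq> []" using d(2) ne by auto
  have "strict_shifted_pair a' b' \<and> j + 1 + length b' \<le> length a'"
    using ssp_ext[OF g nab, of "c - j" j] pa(3) d(1) by (simp add: ext_def)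
  moreover have "is_partition a'" "is_partition b'" using pa unfolding a'_def b'_def by (auto simp: is_partition_filter)
  ultimately have "(a',b') \<in> SSP M'" "j + 1 + length b' \<le> length a'" using d(2) by (auto simp: SSP_def)
  then show ?thesis using d by fastforce
qed

lemma RS_eq: "RS M H = (\<Union>(j,h)\<in>IR H. ext v c j ` RS M' h)"
proof (rule set_eqI, rule iffI)
  fix x assume x: "x \<in> RS M H"
  obtain a b where ab: "x = (a,b)" by fastforce
  have xp: "(a,b) \<in> SSP M" "length a = H + 1 + length b" using x ab by (auto simp: RS_def)
  obtain j p where jp: "j \<le> c" "p \<in> SSP M'" "(a,b) = ext v c j p" "j + 1 + length (snd p) \<le> length (fst p)"
    using SSP_dec[OF xp(1)] by blast
  obtain a' b' where p: "p = (a',b')" by fastforce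
  define h where "h = length a' - 1 - length b'"
  have la: "length a = length a' + (c - j)" "length b = length b' + j" using jp(3) p by (auto simp: ext_def)
  have "(j,h) \<in> IR H" using la xp(2) jp(1,4) p unfolding IR_def h_def by auto
  moreover have "p \<in> RS M' h" using jp(2,4) p h_def by (auto simp: RS_def)
  ultimately show "x \<in> (\<Union>(j,h)\<in>IR H. ext v c j ` RS M' h)" using jp ab by blast
next
  fix x assume "x \<in> (\<Union>(j,h)\<in>IR H. ext v c j ` RS M' h)"
  then obtain j h p where jh: "(j,h) \<in> IR H" "p \<in> RS M' h" "x = ext v c j p" by blast
  obtain a' b' where p: "p = (a',b')" by fastforce
  have pp: "(a',b') \<in> SSP M'" "length a' = h + 1 + length b'" using jh(2) p by (auto simp: RS_def)
  have jc: "j \<le> c" "j \<le> h" "h + c = H + 2 * j" using jh(1) by (auto simp: IR_def)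
  have "x \<in> SSP M" using SSP_ext[OF pp(1) jc(1)] pp(2) jc(2) jh(3) p by simp
  moreover have "length (fst x) = H + 1 + length (snd x)"
    using jh(3) p pp(2) jc by (auto simp: ext_def)
  ultimately show "x \<in> RS M H" by (cases x) (simp add: RS_def)
qed

end

lemma finite_pairs: "finite {(a,b). mset a + mset b = (M::nat multiset)}"
proof -
  let ?S = "{xs. set xs \<subseteq> set_mset M \<and> length xs \<le> size M}"
  have "{(a,b). mset a + mset b = M} \<subseteq> ?S \<times> ?S"
  proof
    fix x assume "x \<in> {(a,b). mset a + mset b = M}"
    then obtain a b where x: "x = (a,b)" "mset a + mset b = M" by blast
    have "size (mset a) \<le> size M" "size (mset b) \<le> size M" using x(2) by (auto dest: sym)
    then show "x \<in> ?S \<times> ?S" using x by auto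
  qed
  moreover have "finite (?S \<times> ?S)" by (intro finite_cartesian_product finite_lists_length_le) auto
  ultimately show ?thesis by (rule finite_subset)
qed

lemma finite_PP: "finite (PP M)"
  by (rule finite_subset[OF _ finite_pairs[of M]]) (auto simp: PP_def)
lemma finite_SSP: "finite (SSP M)"
  by (rule finite_subset[OF _ finite_pairs[of M]]) (auto simp: SSP_def)
lemma finite_LS: "finite (LS M E T)"
  by (rule finite_subset[OF _ finite_PP[of M]]) (auto simp: LS_def)
lemma finite_RS: "finite (RS M H)"
  by (rule finite_subset[OF _ finite_SSP[of M]]) (auto simp: RS_def)

context stepctx
begin

lemma LS_gt: "p \<in> LS M' e t \<Longrightarrow> (\<forall>x\<in>set (fst p). v < x) \<and> (\<forall>x\<in>set (snd p). v < x)"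
proof -
  assume "p \<in> LS M' e t"
  then have "mset (fst p) + mset (snd p) = M'" by (cases p) (simp add: LS_def PP_def)
  then show ?thesis using mset_gt[OF _ gt] by blast
qed
lemma RS_gt: "p \<in> RS M' h \<Longrightarrow> (\<forall>x\<in>set (fst p). v < x) \<and> (\<forall>x\<in>set (snd p). v < x)"
proof -
  assume "p \<in> RS M' h"
  then have "mset (fst p) + mset (snd p) = M'" by (cases p) (simp add: RS_def SSP_def)
  then show ?thesis using mset_gt[OF _ gt] by blast
qed

lemma finite_IL: "finite (IL E T)"
proof (rule finite_subset[of _ "{..c} \<times> {..E+c} \<times> {..T}"])
  show "IL E T \<subseteq> {..c} \<times> {..E+c} \<times> {..T}"
  proof
    fix x assume "x \<in> IL E T"
    then obtain j e t where x: "x = (j,e,t)" "j \<le> c" "t + (j - e) = T" "(c - j) + (e - j) = E"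
      unfolding IL_def by blast
    then have "e \<le> E + c" "t \<le> T" by linarith+
    then show "x \<in> {..c} \<times> {..E+c} \<times> {..T}" using x by simp
  qed
qed simp
lemma finite_IR: "finite (IR H)"
proof (rule finite_subset[of _ "{..c} \<times> {..H+c}"])
  show "IR H \<subseteq> {..c} \<times> {..H+c}"
  proof
    fix x assume "x \<in> IR H"
    then obtain j h where x: "x = (j,h)" "j \<le> c" "j \<le> h" "h + c = H + 2 * j"
      unfolding IR_def by blast
    then have "h \<le> H + c" by linarith
    then show "x \<in> {..c} \<times> {..H+c}" using x by simp
  qed
qed simp

lemma card_LS_sum: "card (LS M E T) = (\<Sum>(j,e,t)\<in>IL E T. card (LS M' e t))"
proof -
  have "card (LS M E T) = card (\<Union>((\<lambda>(j,e,t). ext v c j ` LS M' e t) ` IL E T))"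
    by (simp add: LS_eq)
  also have "\<dots> = (\<Sum>x\<in>IL E T. card ((\<lambda>(j,e,t). ext v c j ` LS M' e t) x))"
  proof (rule card_UN_disjoint[OF finite_IL])
    show "\<forall>x\<in>IL E T. finite ((\<lambda>(j,e,t). ext v c j ` LS M' e t) x)" using finite_LS by auto
    show "\<forall>x\<in>IL E T. \<forall>y\<in>IL E T. x \<noteq> y \<longrightarrow>
      (\<lambda>(j,e,t). ext v c j ` LS M' e t) x \<inter> (\<lambda>(j,e,t). ext v c j ` LS M' e t) y = {}"
    proof (intro ballI impI)
      fix x y assume "x \<in> IL E T" "y \<in> IL E T" "x \<noteq> y"
      obtain j1 e1 t1 where x: "x = (j1,e1,t1)" by (cases x) auto
      obtain j2 e2 t2 where y: "y = (j2,e2,t2)" by (cases y) auto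
      have ex: "(\<lambda>(j,e,t). ext v c j ` LS M' e t) x = ext v c j1 ` LS M' e1 t1" using x by simp
      have ey: "(\<lambda>(j,e,t). ext v c j ` LS M' e t) y = ext v c j2 ` LS M' e2 t2" using y by simp
      show "(\<lambda>(j,e,t). ext v c j ` LS M' e t) x \<inter> (\<lambda>(j,e,t). ext v c j ` LS M' e t) y = {}"
        unfolding ex ey
      proof (rule equals0I)
        fix z assume "z \<in> ext v c j1 ` LS M' e1 t1 \<inter> ext v c j2 ` LS M' e2 t2"
        then have "z \<in> ext v c j1 ` LS M' e1 t1" "z \<in> ext v c j2 ` LS M' e2 t2" by simp_all
        then obtain p q where pq: "p \<in> LS M' e1 t1" "q \<in> LS M' e2 t2" "ext v c j1 p = ext v c j2 q"
          by (metis imageE)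
        have "j1 = j2" "p = q" using ext_inj[OF _ _ _ _ pq(3)] LS_gt[OF pq(1)] LS_gt[OF pq(2)] by auto
        obtain a b where p: "p = (a,b)" by fastforce
        have "bal2 a 0 b = t1" "length a + t1 = e1 + 1 + length b" using pq(1) p by (simp_all add: LS_def)
        moreover have "bal2 a 0 b = t2" "length a + t2 = e2 + 1 + length b" using pq(2) p \<open>p = q\<close> by (simp_all add: LS_def)
        ultimately have "t1 = t2" "e1 = e2" by simp_all
        then show False using \<open>x \<noteq> y\<close> x y \<open>j1 = j2\<close> by simp
      qed
    qed
  qed
  also have "\<dots> = (\<Sum>(j,e,t)\<in>IL E T. card (LS M' e t))"
  proof (rule sum.cong[OF refl])
    fix x assume "x \<in> IL E T"
    obtain j e t where x: "x = (j,e,t)" by (cases x) auto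
    have "inj_on (ext v c j) (LS M' e t)"
    proof (rule inj_onI)
      fix p q assume "p \<in> LS M' e t" "q \<in> LS M' e t" "ext v c j p = ext v c j q"
      then show "p = q" using ext_inj(2)[of p v q c j j] LS_gt by blast
    qed
    then show "card ((\<lambda>(j,e,t). ext v c j ` LS M' e t) x) = (\<lambda>(j,e,t). card (LS M' e t)) x"
      using x by (simp add: card_image)
  qed
  finally show ?thesis .
qed

lemma card_RS_sum: "card (RS M H) = (\<Sum>(j,h)\<in>IR H. card (RS M' h))"
proof -
  have "card (RS M H) = card (\<Union>((\<lambda>(j,h). ext v c j ` RS M' h) ` IR H))"
    by (simp add: RS_eq)
  also have "\<dots> = (\<Sum>x\<in>IR H. card ((\<lambda>(j,h). ext v c j ` RS M' h) x))"
  proof (rule card_UN_disjoint[OF finite_IR])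
    show "\<forall>x\<in>IR H. finite ((\<lambda>(j,h). ext v c j ` RS M' h) x)" using finite_RS by auto
    show "\<forall>x\<in>IR H. \<forall>y\<in>IR H. x \<noteq> y \<longrightarrow>
      (\<lambda>(j,h). ext v c j ` RS M' h) x \<inter> (\<lambda>(j,h). ext v c j ` RS M' h) y = {}"
    proof (intro ballI impI)
      fix x y assume "x \<in> IR H" "y \<in> IR H" "x \<noteq> y"
      obtain j1 h1 where x: "x = (j1,h1)" by (cases x) auto
      obtain j2 h2 where y: "y = (j2,h2)" by (cases y) auto
      have ex: "(\<lambda>(j,h). ext v c j ` RS M' h) x = ext v c j1 ` RS M' h1" using x by simp
      have ey: "(\<lambda>(j,h). ext v c j ` RS M' h) y = ext v c j2 ` RS M' h2" using y by simp
      show "(\<lambda>(j,h). ext v c j ` RS M' h) x \<inter> (\<lambda>(j,h). ext v c j ` RS M' h) y = {}"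
        unfolding ex ey
      proof (rule equals0I)
        fix z assume "z \<in> ext v c j1 ` RS M' h1 \<inter> ext v c j2 ` RS M' h2"
        then have "z \<in> ext v c j1 ` RS M' h1" "z \<in> ext v c j2 ` RS M' h2" by simp_all
        then obtain p q where pq: "p \<in> RS M' h1" "q \<in> RS M' h2" "ext v c j1 p = ext v c j2 q"
          by (metis imageE)
        have "j1 = j2" "p = q" using ext_inj[OF _ _ _ _ pq(3)] RS_gt[OF pq(1)] RS_gt[OF pq(2)] by auto
        obtain a b where p: "p = (a,b)" by fastforce
        have "length a = h1 + 1 + length b" using pq(1) p by (simp add: RS_def)
        moreover have "length a = h2 + 1 + length b" using pq(2) p \<open>p = q\<close> by (simp add: RS_def)
        ultimately have "h1 = h2" by simp
        then show False using \<open>x \<noteq> y\<close> x y \<open>j1 = j2\<close> by simp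
      qed
    qed
  qed
  also have "\<dots> = (\<Sum>(j,h)\<in>IR H. card (RS M' h))"
  proof (rule sum.cong[OF refl])
    fix x assume "x \<in> IR H"
    obtain j h where x: "x = (j,h)" by (cases x) auto
    have "inj_on (ext v c j) (RS M' h)"
    proof (rule inj_onI)
      fix p q assume "p \<in> RS M' h" "q \<in> RS M' h" "ext v c j p = ext v c j q"
      then show "p = q" using ext_inj(2)[of p v q c j j] RS_gt by blast
    qed
    then show "card ((\<lambda>(j,h). ext v c j ` RS M' h) x) = (\<lambda>(j,h). card (RS M' h)) x"
      using x by (simp add: card_image)
  qed
  finally show ?thesis .
qed

definition phi :: "nat \<times> nat \<times> nat \<Rightarrow> nat \<times> nat" where
  "phi x = (case x of (j,e,t) \<Rightarrow> (if j \<le> e then j else e, e + t))"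
definition psi :: "nat \<Rightarrow> nat \<Rightarrow> nat \<times> nat \<Rightarrow> nat \<times> nat \<times> nat" where
  "psi E T y = (case y of (j,h) \<Rightarrow> if c \<le> E + j then (j, h - T, T) else (c - E, j, h - j))"

lemma phi_bij: "bij_betw phi (IL E T) (IR (E + T))"
proof (rule bij_betw_byWitness[where f' = "psi E T"])
  show "\<forall>x\<in>IL E T. psi E T (phi x) = x"
  proof
    fix x assume "x \<in> IL E T"
    then obtain j e t where x: "x = (j,e,t)" "j \<le> c" "t + (j - e) = T" "(c - j) + (e - j) = E"
      unfolding IL_def by blast
    show "psi E T (phi x) = x"
    proof (cases "j \<le> e")
      case True
      then have "t = T" "c \<le> E + j" using x by linarith+
      then show ?thesis using x True by (simp add: phi_def psi_def)
    next
      case False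
      then have "\<not> c \<le> E + e" "c - E = j" using x by linarith+
      then show ?thesis using x False by (simp add: phi_def psi_def)
    qed
  qed
  show "\<forall>y\<in>IR (E + T). phi (psi E T y) = y"
  proof
    fix y assume "y \<in> IR (E + T)"
    then obtain j h where y: "y = (j,h)" "j \<le> c" "j \<le> h" "h + c = E + T + 2 * j"
      unfolding IR_def by blast
    show "phi (psi E T y) = y"
    proof (cases "c \<le> E + j")
      case True
      then have "j \<le> h - T" "h - T + T = h" using y by linarith+
      then show ?thesis using y True by (simp add: phi_def psi_def)
    next
      case False
      then have "\<not> c - E \<le> j" "j + (h - j) = h" using y by linarith+
      then show ?thesis using y False by (simp add: phi_def psi_def)
    qed
  qed
  show "phi ` IL E T \<subseteq> IR (E + T)"
  proof
    fix y assume "y \<in> phi ` IL E T"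
    then obtain z where "z \<in> IL E T" "y = phi z" by blast
    then obtain j e t where x: "y = phi (j,e,t)" "j \<le> c" "t + (j - e) = T" "(c - j) + (e - j) = E"
      unfolding IL_def by blast
    show "y \<in> IR (E + T)"
    proof (cases "j \<le> e")
      case True
      then have "y = (j, e + t)" using x by (simp add: phi_def)
      moreover have "j \<le> e + t" "e + t + c = E + T + 2 * j" using x True by linarith+
      ultimately show ?thesis using x by (simp add: IR_def)
    next
      case False
      then have "y = (e, e + t)" using x by (simp add: phi_def)
      moreover have "e \<le> c" "e + t + c = E + T + 2 * e" using x False by linarith+
      ultimately show ?thesis by (simp add: IR_def)
    qed
  qed
  show "psi E T ` IR (E + T) \<subseteq> IL E T"
  proof
    fix x assume "x \<in> psi E T ` IR (E + T)"
    then obtain z where "z \<in> IR (E + T)" "x = psi E T z" by blast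
    then obtain j h where y: "x = psi E T (j,h)" "j \<le> c" "j \<le> h" "h + c = E + T + 2 * j"
      unfolding IR_def by blast
    show "x \<in> IL E T"
    proof (cases "c \<le> E + j")
      case True
      then have "x = (j, h - T, T)" using y by (simp add: psi_def)
      moreover have "T + (j - (h - T)) = T" "(c - j) + ((h - T) - j) = E" using y True by linarith+
      ultimately show ?thesis using y by (simp add: IL_def)
    next
      case False
      then have "x = (c - E, j, h - j)" using y by (simp add: psi_def)
      moreover have "c - E \<le> c" "(h - j) + ((c - E) - j) = T" "(c - (c - E)) + (j - (c - E)) = E"
        using y False by linarith+
      ultimately show ?thesis by (simp add: IL_def)
    qed
  qed
qed

lemma card_step:
  assumes IH: "\<And>e t. card (LS M' e t) = card (RS M' (e + t))"
  shows "card (LS M E T) = card (RS M (E + T))"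
proof -
  have "card (LS M E T) = (\<Sum>(j,e,t)\<in>IL E T. card (RS M' (e + t)))"
    by (simp add: card_LS_sum IH)
  also have "\<dots> = (\<Sum>x\<in>IL E T. (\<lambda>(j,h). card (RS M' h)) (phi x))"
    by (rule sum.cong[OF refl]) (auto simp: phi_def)
  also have "\<dots> = (\<Sum>(j,h)\<in>IR (E + T). card (RS M' h))"
    by (rule sum.reindex_bij_betw[OF phi_bij])
  also have "\<dots> = card (RS M (E + T))" by (simp add: card_RS_sum)
  finally show ?thesis .
qed

end

lemma rep_pair:
  assumes "mset a + mset b = replicate_mset c v"
  shows "a = replicate (length a) v" "b = replicate (length b) v" "length a + length b = c"
proof -
  have "set a \<union> set b = set_mset (replicate_mset c v)" using arg_cong[OF assms, of set_mset] by simp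
  then have "\<forall>x\<in>set a. x = v" "\<forall>x\<in>set b. x = v" by (auto split: if_splits)
  then show "a = replicate (length a) v" "b = replicate (length b) v"
    by (simp_all add: replicate_length_same)
  have "size (mset a + mset b) = c" using assms by simp
  then show "length a + length b = c" by simp
qed

lemma cg_rep: "cg (replicate n v) v = 0"
  by (simp add: cg_def)

lemma base_LS:
  assumes "0 < v"
  shows "LS (replicate_mset c v) E T = (if E + T + 1 = c then {(replicate (E+1) v, replicate T v)} else {})"
proof (rule set_eqI, rule iffI)
  fix x assume x: "x \<in> LS (replicate_mset c v) E T"
  obtain a b where ab: "x = (a,b)" by fastforce
  have h: "mset a + mset b = replicate_mset c v" "bal2 a 0 b = T" "length a + T = E + 1 + length b"
    using x ab by (auto simp: LS_def PP_def)
  note r = rep_pair[OF h(1)]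
  have "bal2 a 0 b = length b"
    using bal2_rep[OF cg_rep[of "length a" v], of 0 "length b"] r by simp
  then have "T = length b" "length a = E + 1" using h by simp_all
  then show "x \<in> (if E + T + 1 = c then {(replicate (E+1) v, replicate T v)} else {})"
    using r ab by simp
next
  fix x assume x: "x \<in> (if E + T + 1 = c then {(replicate (E+1) v, replicate T v)} else {})"
  then have c: "E + T + 1 = c" and xe: "x = (replicate (E+1) v, replicate T v)"
    by (simp_all split: if_splits)
  have "mset (replicate (E+1) v) + mset (replicate T v) = replicate_mset c v"
    using c by (intro multiset_eqI) auto
  moreover have "is_partition (replicate n v)" for n
    using assms sorted_rep[of n v] by (simp add: is_partition_def)
  moreover have "bal2 (replicate (E+1) v) 0 (replicate T v) = T"
    using bal2_rep[OF cg_rep[of "E+1" v], of 0 T] by simp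
  ultimately show "x \<in> LS (replicate_mset c v) E T" using xe
    unfolding LS_def PP_def by (simp del: replicate_Suc)
qed

lemma base_RS:
  assumes "0 < v"
  shows "RS (replicate_mset c v) H = (if H + 1 = c then {(replicate c v, [])} else {})"
proof (rule set_eqI, rule iffI)
  fix x assume x: "x \<in> RS (replicate_mset c v) H"
  obtain a b where ab: "x = (a,b)" by fastforce
  have h: "mset a + mset b = replicate_mset c v" "strict_shifted_pair a b" "length a = H + 1 + length b"
    using x ab by (auto simp: RS_def SSP_def)
  note r = rep_pair[OF h(1)]
  have "b = []"
  proof (rule ccontr)
    assume "b \<noteq> []"
    then have "b ! 0 < a ! Suc 0" using h(2) by (auto simp: ssp_alt)
    moreover have "Suc 0 < length a" using h(2) \<open>b \<noteq> []\<close> by (cases b) (auto simp: ssp_alt)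
    moreover have "b ! 0 = v" using r(2) \<open>b \<noteq> []\<close> by (metis length_greater_0_conv nth_replicate)
    moreover have "a ! Suc 0 = v" using r(1) \<open>Suc 0 < length a\<close> by (metis nth_replicate)
    ultimately show False by simp
  qed
  then have "length a = c" "H + 1 = c" using r(3) h(3) by simp_all
  then have "a = replicate c v" using r(1) by simp
  then show "x \<in> (if H + 1 = c then {(replicate c v, [])} else {})"
    using \<open>H + 1 = c\<close> \<open>b = []\<close> ab by simp
next
  fix x :: "nat list \<times> nat list" assume x: "x \<in> (if H + 1 = c then {(replicate c v, [])} else {})"
  then have c: "H + 1 = c" and xe: "x = (replicate c v, [])"
    by (simp_all split: if_splits)
  have "is_partition (replicate n v)" for n
    using assms sorted_rep[of n v] by (simp add: is_partition_def)
  moreover have "strict_shifted_pair (replicate c v) []" using c by (simp add: ssp_alt)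
  ultimately show "x \<in> RS (replicate_mset c v) H" using xe c assms by (simp add: RS_def SSP_def is_partition_def)
qed

theorem card_LS_RS:
  assumes "\<forall>x\<in>#M. 0 < x"
  shows "card (LS M E T) = card (RS M (E + T))"
  using assms
proof (induction "size M" arbitrary: M E T rule: less_induct)
  case less
  show ?case
  proof (cases "M = {#}")
    case True
    have "LS M E T = {}" using True by (auto simp: LS_def PP_def)
    moreover have "RS M (E + T) = {}" using True by (auto simp: RS_def SSP_def strict_shifted_pair_def)
    ultimately show ?thesis by simp
  next
    case False
    define v where "v = Min (set_mset M)"
    have vin: "v \<in># M" using False unfolding v_def by (simp add: Min_in)
    have vmin: "\<forall>x\<in>#M. v \<le> x" unfolding v_def by simp
    define c where "c = count M v"
    have cpos: "0 < c" using vin unfolding c_def by simp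
    define M' where "M' = filter_mset (\<lambda>x. v < x) M"
    have Meq: "M = M' + replicate_mset c v"
    proof (rule multiset_eqI)
      fix x
      show "count M x = count (M' + replicate_mset c v) x"
        using vmin unfolding M'_def c_def
        by (cases "x = v") (auto simp: not_in_iff[symmetric] order.order_iff_strict)
    qed
    have vpos: "0 < v" using less.prems vin by simp
    show ?thesis
    proof (cases "M' = {#}")
      case True
      then have "M = replicate_mset c v" using Meq by simp
      then show ?thesis using base_LS[OF vpos] base_RS[OF vpos] by simp
    next
      case False
      interpret stepctx v c M'
        using False vpos by unfold_locales (auto simp: M'_def)
      have sz: "size M' < size M" using Meq cpos by simp
      have pos': "\<forall>x\<in>#M'. 0 < x" using less.prems by (simp add: M'_def)
      have IH: "\<And>e t. card (LS M' e t) = card (RS M' (e + t))"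
        using less.hyps[OF sz pos'] by blast
      show ?thesis using card_step[OF IH] Meq by simp
    qed
  qed
qed

lemma card_all: "card (LS M E T) = card (RS M (E + T))"
proof (cases "\<forall>x\<in>#M. 0 < x")
  case True then show ?thesis by (rule card_LS_RS)
next
  case False
  then obtain z where z: "z \<in># M" "z = 0" by auto
  have "LS M E T = {}"
  proof (rule equals0I)
    fix p assume "p \<in> LS M E T"
    then have "is_partition (fst p)" "is_partition (snd p)" "mset (fst p) + mset (snd p) = M"
      by (auto simp: LS_def PP_def)
    then show False using z by (auto simp: is_partition_def)
  qed
  moreover have "RS M (E + T) = {}"
  proof (rule equals0I)
    fix p assume "p \<in> RS M (E + T)"
    then have "is_partition (fst p)" "is_partition (snd p)" "mset (fst p) + mset (snd p) = M"
      by (auto simp: RS_def SSP_def)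
    then show False using z by (auto simp: is_partition_def)
  qed
  ultimately show ?thesis by simp
qed

definition Mp :: "nat list \<times> nat list \<Rightarrow> nat multiset" where
  "Mp p = mset (fst p) + mset (snd p)"
definition Gb :: "nat \<Rightarrow> nat \<Rightarrow> nat multiset \<Rightarrow> (nat list \<times> nat list \<Rightarrow> nat list \<times> nat list)" where
  "Gb m t M = (SOME g. bij_betw g (LS M (m+t) t) (RS M (m+t+t)))"
definition Fwd :: "nat \<Rightarrow> nat \<Rightarrow> nat list \<times> nat list \<Rightarrow> nat list \<times> nat list" where
  "Fwd m t p = Gb m t (Mp p) p"
definition Bwd :: "nat \<Rightarrow> nat \<Rightarrow> nat list \<times> nat list \<Rightarrow> nat list \<times> nat list" where
  "Bwd m t p = inv_into (LS (Mp p) (m+t) t) (Gb m t (Mp p)) p"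

lemma Gb_bij: "bij_betw (Gb m t M) (LS M (m+t) t) (RS M (m+t+t))"
proof -
  have "\<exists>g. bij_betw g (LS M (m+t) t) (RS M (m+t+t))"
    using finite_same_card_bij[OF finite_LS finite_RS card_all] by simp
  then show ?thesis unfolding Gb_def by (rule someI_ex)
qed

lemma LS_Mp: "p \<in> LS M E T \<Longrightarrow> Mp p = M"
  by (cases p) (simp add: LS_def PP_def Mp_def)
lemma RS_Mp: "p \<in> RS M H \<Longrightarrow> Mp p = M"
  by (cases p) (simp add: RS_def SSP_def Mp_def)

lemma F1:
  assumes "p \<in> LS (Mp p) (m+t) t"
  shows "Fwd m t p \<in> RS (Mp p) (m+t+t)" "Mp (Fwd m t p) = Mp p" "Bwd m t (Fwd m t p) = p"
proof -
  have b: "bij_betw (Gb m t (Mp p)) (LS (Mp p) (m+t) t) (RS (Mp p) (m+t+t))" by (rule Gb_bij)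
  show r: "Fwd m t p \<in> RS (Mp p) (m+t+t)" unfolding Fwd_def using bij_betw_apply[OF b assms] .
  show e: "Mp (Fwd m t p) = Mp p" using RS_Mp[OF r] .
  show "Bwd m t (Fwd m t p) = p" unfolding Bwd_def e
    using inv_into_f_f[OF bij_betw_imp_inj_on[OF b] assms] by (simp add: Fwd_def)
qed

lemma F2:
  assumes "q \<in> RS (Mp q) (m+t+t)"
  shows "Bwd m t q \<in> LS (Mp q) (m+t) t" "Mp (Bwd m t q) = Mp q" "Fwd m t (Bwd m t q) = q"
proof -
  have b: "bij_betw (Gb m t (Mp q)) (LS (Mp q) (m+t) t) (RS (Mp q) (m+t+t))" by (rule Gb_bij)
  have qi: "q \<in> Gb m t (Mp q) ` LS (Mp q) (m+t) t" using b assms by (simp add: bij_betw_def)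
  show l: "Bwd m t q \<in> LS (Mp q) (m+t) t" unfolding Bwd_def by (rule inv_into_into[OF qi])
  show e: "Mp (Bwd m t q) = Mp q" using LS_Mp[OF l] .
  show "Fwd m t (Bwd m t q) = q" unfolding Fwd_def e
    using f_inv_into_f[OF qi] by (simp add: Bwd_def)
qed

definition good :: "nat list \<Rightarrow> nat list \<Rightarrow> bool" where
  "good a b \<longleftrightarrow> is_partition a \<and> is_partition b \<and> a \<noteq> [] \<and> (\<forall>x\<in>set b. x \<le> hd a)"

lemma good_hd_max:
  assumes "good a b"
  shows "hd a = Max (set_mset (mset a + mset b))"
proof -
  have a: "a \<noteq> []" "sorted_wrt (\<ge>) a" "\<forall>x\<in>set b. x \<le> hd a"
    using assms by (auto simp: good_def is_partition_def)
  have "\<forall>x\<in>set a. x \<le> hd a" using a(1,2) by (cases a) auto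
  then show ?thesis using a by (intro Max_eqI[symmetric]) auto
qed

lemma good_SSP:
  assumes "(a,b) \<in> SSP M"
  shows "good a b"
proof -
  have h: "is_partition a" "is_partition b" "strict_shifted_pair a b" using assms by (auto simp: SSP_def)
  have l: "length b < length a" "\<forall>i<length b. b ! i < a ! Suc i" using h(3) by (auto simp: ssp_alt)
  have "\<forall>x\<in>set b. x \<le> hd a"
  proof (cases b)
    case Nil then show ?thesis by simp
  next
    case (Cons y ys)
    have "y < a ! 1" using l Cons by auto
    moreover have "a ! 1 \<le> a ! 0" using h(1) l(1) Cons by (auto simp: is_partition_def sorted_wrt_iff_nth_less)
    moreover have "\<forall>x\<in>set ys. x \<le> y" using h(2) Cons by (auto simp: is_partition_def)
    moreover have "hd a = a ! 0" using l(1) by (cases a) auto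
    ultimately show ?thesis using Cons by fastforce
  qed
  then show ?thesis using h l(1) by (auto simp: good_def)
qed

lemma part1: "a \<noteq> [] \<Longrightarrow> Defs.part a 1 = hd a"
  by (cases a) (simp_all add: Defs.part_def)

lemma alpha_simp: "alpha (D, As, Bs) i = As ! (i - 1)" by (simp add: alpha_def)
lemma beta_simp: "beta (D, As, Bs) i = Bs ! (i - 1)" by (simp add: beta_def)
lemma dD_simp: "dD (D, As, Bs) = D" by (simp add: dD_def)

lemma kmds_good:
  assumes "is_kmds k n (D, As, Bs)" "i < k - 1"
  shows "good (As ! i) (Bs ! i)"
proof -
  have "Suc i \<in> {1..k}" "Suc i \<in> {1..<k}" using assms(2) by auto
  then have "is_partition (As ! i)" "is_partition (Bs ! i)" "As ! i \<noteq> []"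
      "\<forall>x\<in>set (Bs ! i). x \<le> Defs.part (As ! i) 1"
    using assms(1) unfolding is_kmds_def alpha_simp beta_simp by fastforce+
  then show ?thesis using part1 by (simp add: good_def)
qed

lemma replace:
  assumes kmds: "is_kmds k n (D, As, Bs)" and k: "1 \<le> k"
    and len: "length As' = k" "length Bs' = k"
    and lst: "As' ! (k-1) = As ! (k-1)" "Bs' ! (k-1) = Bs ! (k-1)"
    and g: "\<And>i. i < k - 1 \<Longrightarrow> good (As'!i) (Bs'!i) \<and> mset (As'!i) + mset (Bs'!i) = mset (As!i) + mset (Bs!i)"
  shows "is_kmds k n (D, As', Bs')"
proof -
  have K: "length As = k" "length Bs = k"
    "\<forall>i\<in>{1..k}. is_partition (As ! (i-1)) \<and> is_partition (Bs ! (i-1))"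
    "(\<Sum>i=1..k. sum_list (As ! (i-1)) + sum_list (Bs ! (i-1))) + D\<^sup>2 = n"
    "\<forall>i\<in>{2..k}. \<forall>x\<in>set (As ! (i-1)) \<union> set (Bs ! (i-1)). Defs.part (As ! (i - 1 - 1)) 1 \<le> x"
    "\<forall>x\<in>set (As ! (k-1)) \<union> set (Bs ! (k-1)). x \<le> D"
    using kmds unfolding is_kmds_def alpha_simp beta_simp dD_simp by simp_all
  have gd: "good (As ! i) (Bs ! i)" if "i < k - 1" for i using kmds_good[OF kmds that] .
  have sete: "set (As' ! j) \<union> set (Bs' ! j) = set (As ! j) \<union> set (Bs ! j)" if "j < k" for j
  proof (cases "j < k - 1")
    case True
    then have "set_mset (mset (As'!j) + mset (Bs'!j)) = set_mset (mset (As!j) + mset (Bs!j))"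
      using g by simp
    then show ?thesis by simp
  next
    case False
    then have "j = k - 1" using that by simp
    then show ?thesis using lst by simp
  qed
  have hde: "Defs.part (As' ! j) 1 = Defs.part (As ! j) 1" if "j < k - 1" for j
  proof -
    have "good (As'!j) (Bs'!j)" using g that by simp
    then have "Defs.part (As' ! j) 1 = Max (set_mset (mset (As'!j) + mset (Bs'!j)))"
      using good_hd_max part1 by (simp add: good_def)
    also have "\<dots> = Max (set_mset (mset (As!j) + mset (Bs!j)))" using g that by simp
    also have "\<dots> = Defs.part (As ! j) 1" using gd[OF that] good_hd_max part1 by (simp add: good_def)
    finally show ?thesis .
  qed
  have P: "\<forall>i\<in>{1..k}. is_partition (As' ! (i-1)) \<and> is_partition (Bs' ! (i-1))"
  proof
    fix i assume i: "i \<in> {1..k}"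
    show "is_partition (As' ! (i-1)) \<and> is_partition (Bs' ! (i-1))"
    proof (cases "i - 1 < k - 1")
      case True then show ?thesis using g[OF True] by (simp add: good_def)
    next
      case False then have "i - 1 = k - 1" using i by auto
      then show ?thesis using K(3) i lst by auto
    qed
  qed
  have S: "(\<Sum>i=1..k. sum_list (As' ! (i-1)) + sum_list (Bs' ! (i-1))) = (\<Sum>i=1..k. sum_list (As ! (i-1)) + sum_list (Bs ! (i-1)))"
  proof (rule sum.cong[OF refl])
    fix i assume i: "i \<in> {1..k}"
    show "sum_list (As' ! (i-1)) + sum_list (Bs' ! (i-1)) = sum_list (As ! (i-1)) + sum_list (Bs ! (i-1))"
    proof (cases "i - 1 < k - 1")
      case True
      have "sum_mset (mset (As' ! (i-1)) + mset (Bs' ! (i-1))) = sum_mset (mset (As ! (i-1)) + mset (Bs ! (i-1)))"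
        using g[OF True] by simp
      then show ?thesis by (simp add: sum_mset_sum_list)
    next
      case False then have "i - 1 = k - 1" using i by auto
      then show ?thesis using lst by simp
    qed
  qed
  have NE: "\<forall>i\<in>{1..<k}. As' ! (i-1) \<noteq> []" using g by (auto simp: good_def)
  have BL: "\<forall>i\<in>{1..<k}. \<forall>x\<in>set (Bs' ! (i-1)). x \<le> Defs.part (As' ! (i-1)) 1"
  proof (intro ballI)
    fix i x assume i: "i \<in> {1..<k}" and x: "x \<in> set (Bs' ! (i-1))"
    have "i - 1 < k - 1" using i by auto
    then have "good (As' ! (i-1)) (Bs' ! (i-1))" using g by simp
    then show "x \<le> Defs.part (As' ! (i-1)) 1" using x part1 by (simp add: good_def)
  qed
  have CR: "\<forall>i\<in>{2..k}. \<forall>x\<in>set (As' ! (i-1)) \<union> set (Bs' ! (i-1)). Defs.part (As' ! (i - 1 - 1)) 1 \<le> x"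
  proof (intro ballI)
    fix i x assume i: "i \<in> {2..k}" and x: "x \<in> set (As' ! (i-1)) \<union> set (Bs' ! (i-1))"
    have "i - 1 < k" "i - 1 - 1 < k - 1" using i by auto
    then have "x \<in> set (As ! (i-1)) \<union> set (Bs ! (i-1))" "Defs.part (As' ! (i - 1 - 1)) 1 = Defs.part (As ! (i - 1 - 1)) 1"
      using sete x hde by auto
    then show "Defs.part (As' ! (i - 1 - 1)) 1 \<le> x" using K(5) i by auto
  qed
  have LD: "\<forall>x\<in>set (As' ! (k-1)) \<union> set (Bs' ! (k-1)). x \<le> D" using K(6) lst by simp
  show ?thesis unfolding is_kmds_def alpha_simp beta_simp dD_simp
    using len P S K(4) NE BL CR LD by simp
qed

lemma vecL:
  assumes "is_kmds k n (D, As, Bs)" "i < k - 1"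
  shows "(rank k (D,As,Bs) (Suc i) = int mm \<and> nb k (D,As,Bs) (Suc i) = tt) \<longleftrightarrow>
         (As!i, Bs!i) \<in> LS (Mp (As!i, Bs!i)) (mm+tt) tt"
proof -
  have gd: "good (As!i) (Bs!i)" by (rule kmds_good[OF assms])
  have r: "rank k (D,As,Bs) (Suc i) = int (length (As!i)) - int (length (Bs!i)) - 1"
    using assms(2) by (simp add: rank_def alpha_simp beta_simp)
  have "nb k (D,As,Bs) (Suc i) = balanced_count (As!i) (Bs!i)"
    using assms(2) by (auto simp: nb_def alpha_simp beta_simp)
  also have "\<dots> = bal2 (As!i) 0 (Bs!i)"
    using gd bal_aux_bal2[of "As!i" 0 1 "Bs!i"] by (simp add: balanced_count_def good_def is_partition_def)
  finally have nbe: "nb k (D,As,Bs) (Suc i) = bal2 (As!i) 0 (Bs!i)" .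
  show ?thesis using gd r nbe by (auto simp: LS_def PP_def good_def Mp_def)
qed

lemma vecR:
  assumes "is_kmds k n (D, As, Bs)" "i < k - 1"
  shows "(strict_shifted_pair (As!i) (Bs!i) \<and> rank k (D,As,Bs) (Suc i) = int r) \<longleftrightarrow>
         (As!i, Bs!i) \<in> RS (Mp (As!i, Bs!i)) r"
proof -
  have gd: "good (As!i) (Bs!i)" by (rule kmds_good[OF assms])
  have r: "rank k (D,As,Bs) (Suc i) = int (length (As!i)) - int (length (Bs!i)) - 1"
    using assms(2) by (simp add: rank_def alpha_simp beta_simp)
  show ?thesis using gd r by (auto simp: RS_def SSP_def good_def Mp_def)
qed

lemma map_nth_k: "length xs = k \<Longrightarrow> map (\<lambda>i. xs ! i) [0..<k] = xs"
  by (metis map_nth)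

theorem mainTheorem7:
  fixes k n :: nat and m t :: "nat \<Rightarrow> nat"
  assumes "k \<ge> 1"
  shows "\<exists>f. bij_betw f
     {\<eta>. is_kmds k n \<eta> \<and> (\<forall>i\<in>{1..k}. rank k \<eta> i = int (m i))
                         \<and> (\<forall>i\<in>{1..<k}. nb k \<eta> i = t i)}
     {\<eta>. is_kmds k n \<eta> \<and> strict_shifted k \<eta>
                         \<and> (\<forall>i\<in>{1..<k}. rank k \<eta> i = int (m i + 2 * t i))
                         \<and> rank k \<eta> k = int (m k)}"
proof -
  define Fv where "Fv = (\<lambda>i p. if i < k - 1 then Fwd (m (Suc i)) (t (Suc i)) p else p)"
  define Bv where "Bv = (\<lambda>i p. if i < k - 1 then Bwd (m (Suc i)) (t (Suc i)) p else p)"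
  define ap where "ap = (\<lambda>(\<Phi>::nat \<Rightarrow> nat list \<times> nat list \<Rightarrow> nat list \<times> nat list) (\<eta>::durfee).
     (fst \<eta>, map (\<lambda>i. fst (\<Phi> i (fst (snd \<eta>) ! i, snd (snd \<eta>) ! i))) [0..<k],
              map (\<lambda>i. snd (\<Phi> i (fst (snd \<eta>) ! i, snd (snd \<eta>) ! i))) [0..<k]))"
  define L where "L = {\<eta>. is_kmds k n \<eta> \<and> (\<forall>i\<in>{1..k}. rank k \<eta> i = int (m i))
                         \<and> (\<forall>i\<in>{1..<k}. nb k \<eta> i = t i)}"
  define R where "R = {\<eta>. is_kmds k n \<eta> \<and> strict_shifted k \<eta>
                         \<and> (\<forall>i\<in>{1..<k}. rank k \<eta> i = int (m i + 2 * t i))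
                         \<and> rank k \<eta> k = int (m k)}"
  have apD: "ap \<Phi> (D, As, Bs) = (D, map (\<lambda>i. fst (\<Phi> i (As ! i, Bs ! i))) [0..<k],
              map (\<lambda>i. snd (\<Phi> i (As ! i, Bs ! i))) [0..<k])" for \<Phi> D As Bs
    by (simp add: ap_def)
  have fL: "ap Fv \<eta> \<in> R \<and> ap Bv (ap Fv \<eta>) = \<eta>" if eL: "\<eta> \<in> L" for \<eta>
  proof -
    obtain D As Bs where eta: "\<eta> = (D, As, Bs)" by (cases \<eta>) auto
    have km: "is_kmds k n (D, As, Bs)" and rk: "\<forall>i\<in>{1..k}. rank k (D,As,Bs) i = int (m i)"
      and nbk: "\<forall>i\<in>{1..<k}. nb k (D,As,Bs) i = t i"
      using eL eta by (auto simp: L_def)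
    have lens: "length As = k" "length Bs = k" using km by (simp_all add: is_kmds_def)
    have inLS: "(As!i, Bs!i) \<in> LS (Mp (As!i, Bs!i)) (m (Suc i) + t (Suc i)) (t (Suc i))" if "i < k - 1" for i
    proof -
      have "Suc i \<in> {1..k}" "Suc i \<in> {1..<k}" using that by auto
      then show ?thesis using vecL[OF km that] rk nbk by blast
    qed
    have FF: "Fv i (As!i, Bs!i) \<in> RS (Mp (As!i, Bs!i)) (m (Suc i) + t (Suc i) + t (Suc i))"
      "Mp (Fv i (As!i, Bs!i)) = Mp (As!i, Bs!i)" "Bv i (Fv i (As!i, Bs!i)) = (As!i, Bs!i)"
      if "i < k - 1" for i
      using F1[OF inLS[OF that]] that by (simp_all add: Fv_def Bv_def)
    have BF: "Bv i (Fv i (As!i, Bs!i)) = (As!i, Bs!i)" if "i < k" for i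
      using FF(3) by (cases "i < k - 1") (simp_all add: Fv_def Bv_def)
    define As' where "As' = map (\<lambda>i. fst (Fv i (As ! i, Bs ! i))) [0..<k]"
    define Bs' where "Bs' = map (\<lambda>i. snd (Fv i (As ! i, Bs ! i))) [0..<k]"
    have ape: "ap Fv \<eta> = (D, As', Bs')" using eta by (simp add: apD As'_def Bs'_def)
    have nth': "(As'!i, Bs'!i) = Fv i (As!i, Bs!i)" if "i < k" for i
      using that by (simp add: As'_def Bs'_def)
    have lens': "length As' = k" "length Bs' = k" by (simp_all add: As'_def Bs'_def)
    have lst: "As' ! (k-1) = As ! (k-1)" "Bs' ! (k-1) = Bs ! (k-1)"
      using nth'[of "k-1"] assms by (simp_all add: Fv_def)
    have RSi: "(As'!i, Bs'!i) \<in> RS (Mp (As'!i, Bs'!i)) (m (Suc i) + t (Suc i) + t (Suc i))" if "i < k - 1" for i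
      using FF[OF that] nth'[of i] that by simp
    have km': "is_kmds k n (D, As', Bs')"
    proof (rule replace[OF km assms lens' lst])
      fix i assume i: "i < k - 1"
      have "good (As'!i) (Bs'!i)" using RSi[OF i] good_SSP by (simp add: RS_def) blast
      moreover have "mset (As'!i) + mset (Bs'!i) = mset (As!i) + mset (Bs!i)"
      proof -
        have "i < k" using i by simp
        then have "(As'!i, Bs'!i) = Fv i (As!i, Bs!i)" by (rule nth')
        then show ?thesis using FF(2)[OF i] by (metis Mp_def fst_conv snd_conv)
      qed
      ultimately show "good (As'!i) (Bs'!i) \<and> mset (As'!i) + mset (Bs'!i) = mset (As!i) + mset (Bs!i)" by simp
    qed
    have ss: "strict_shifted_pair (As'!i) (Bs'!i) \<and> rank k (D,As',Bs') (Suc i) = int (m (Suc i) + t (Suc i) + t (Suc i))"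
      if "i < k - 1" for i
      using vecR[OF km' that] RSi[OF that] by blast
    have "strict_shifted k (D, As', Bs')"
      unfolding strict_shifted_def alpha_simp beta_simp
    proof
      fix i assume "i \<in> {1..<k}"
      then obtain j where "i = Suc j" "j < k - 1" by (cases i) auto
      then show "strict_shifted_pair (As' ! (i-1)) (Bs' ! (i-1))" using ss by simp
    qed
    moreover have "\<forall>i\<in>{1..<k}. rank k (D,As',Bs') i = int (m i + 2 * t i)"
    proof
      fix i assume "i \<in> {1..<k}"
      then obtain j where "i = Suc j" "j < k - 1" by (cases i) auto
      then show "rank k (D,As',Bs') i = int (m i + 2 * t i)" using ss[of j] by simp
    qed
    moreover have "rank k (D,As',Bs') k = int (m k)"
    proof -
      have "rank k (D,As',Bs') k = rank k (D,As,Bs) k" using lst by (simp add: rank_def alpha_simp beta_simp)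
      then show ?thesis using rk assms by simp
    qed
    ultimately have "ap Fv \<eta> \<in> R" using km' ape by (simp add: R_def)
    moreover have "ap Bv (ap Fv \<eta>) = \<eta>"
    proof -
      have "map (\<lambda>i. fst (Bv i (As' ! i, Bs' ! i))) [0..<k] = map (\<lambda>i. As ! i) [0..<k]"
        using BF nth' by (intro map_cong) auto
      moreover have "map (\<lambda>i. snd (Bv i (As' ! i, Bs' ! i))) [0..<k] = map (\<lambda>i. Bs ! i) [0..<k]"
        using BF nth' by (intro map_cong) auto
      ultimately show ?thesis using ape eta apD[of Bv D As' Bs'] map_nth_k[OF lens(1)] map_nth_k[OF lens(2)] by simp
    qed
    ultimately show ?thesis by simp
  qed
  have gR: "ap Bv \<eta> \<in> L \<and> ap Fv (ap Bv \<eta>) = \<eta>" if eR: "\<eta> \<in> R" for \<eta>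
  proof -
    obtain D As Bs where eta: "\<eta> = (D, As, Bs)" by (cases \<eta>) auto
    have km: "is_kmds k n (D, As, Bs)" and ssk: "strict_shifted k (D,As,Bs)"
      and rk: "\<forall>i\<in>{1..<k}. rank k (D,As,Bs) i = int (m i + 2 * t i)"
      and rkk: "rank k (D,As,Bs) k = int (m k)"
      using eR eta by (auto simp: R_def)
    have lens: "length As = k" "length Bs = k" using km by (simp_all add: is_kmds_def)
    have inRS: "(As!i, Bs!i) \<in> RS (Mp (As!i, Bs!i)) (m (Suc i) + t (Suc i) + t (Suc i))" if "i < k - 1" for i
    proof -
      have si: "Suc i \<in> {1..<k}" using that by auto
      then have "strict_shifted_pair (As!(Suc i - 1)) (Bs!(Suc i - 1))" using ssk unfolding strict_shifted_def alpha_simp beta_simp by blast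
      then have "strict_shifted_pair (As!i) (Bs!i)" by simp
      moreover have "rank k (D,As,Bs) (Suc i) = int (m (Suc i) + t (Suc i) + t (Suc i))" using rk si by simp
      ultimately show ?thesis using vecR[OF km that] by blast
    qed
    have BB: "Bv i (As!i, Bs!i) \<in> LS (Mp (As!i, Bs!i)) (m (Suc i) + t (Suc i)) (t (Suc i))"
      "Mp (Bv i (As!i, Bs!i)) = Mp (As!i, Bs!i)" "Fv i (Bv i (As!i, Bs!i)) = (As!i, Bs!i)"
      if "i < k - 1" for i
      using F2[OF inRS[OF that]] that by (simp_all add: Fv_def Bv_def)
    have FB: "Fv i (Bv i (As!i, Bs!i)) = (As!i, Bs!i)" if "i < k" for i
      using BB(3) by (cases "i < k - 1") (simp_all add: Fv_def Bv_def)
    define As' where "As' = map (\<lambda>i. fst (Bv i (As ! i, Bs ! i))) [0..<k]"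
    define Bs' where "Bs' = map (\<lambda>i. snd (Bv i (As ! i, Bs ! i))) [0..<k]"
    have ape: "ap Bv \<eta> = (D, As', Bs')" using eta by (simp add: apD As'_def Bs'_def)
    have nth': "(As'!i, Bs'!i) = Bv i (As!i, Bs!i)" if "i < k" for i
      using that by (simp add: As'_def Bs'_def)
    have lens': "length As' = k" "length Bs' = k" by (simp_all add: As'_def Bs'_def)
    have lst: "As' ! (k-1) = As ! (k-1)" "Bs' ! (k-1) = Bs ! (k-1)"
      using nth'[of "k-1"] assms by (simp_all add: Bv_def)
    have LSi: "(As'!i, Bs'!i) \<in> LS (Mp (As'!i, Bs'!i)) (m (Suc i) + t (Suc i)) (t (Suc i))" if "i < k - 1" for i
      using BB[OF that] nth'[of i] that by simp
    have km': "is_kmds k n (D, As', Bs')"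
    proof (rule replace[OF km assms lens' lst])
      fix i assume i: "i < k - 1"
      have "good (As'!i) (Bs'!i)" using LSi[OF i] by (simp add: LS_def PP_def good_def)
      moreover have "mset (As'!i) + mset (Bs'!i) = mset (As!i) + mset (Bs!i)"
      proof -
        have "i < k" using i by simp
        then have "(As'!i, Bs'!i) = Bv i (As!i, Bs!i)" by (rule nth')
        then show ?thesis using BB(2)[OF i] by (metis Mp_def fst_conv snd_conv)
      qed
      ultimately show "good (As'!i) (Bs'!i) \<and> mset (As'!i) + mset (Bs'!i) = mset (As!i) + mset (Bs!i)" by simp
    qed
    have ll: "rank k (D,As',Bs') (Suc i) = int (m (Suc i)) \<and> nb k (D,As',Bs') (Suc i) = t (Suc i)"
      if "i < k - 1" for i
      using vecL[OF km' that] LSi[OF that] by blast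
    have "\<forall>i\<in>{1..k}. rank k (D,As',Bs') i = int (m i)"
    proof
      fix i assume i: "i \<in> {1..k}"
      show "rank k (D,As',Bs') i = int (m i)"
      proof (cases "i = k")
        case True
        have "rank k (D,As',Bs') k = rank k (D,As,Bs) k" using lst by (simp add: rank_def alpha_simp beta_simp)
        then show ?thesis using rkk True by simp
      next
        case False
        then obtain j where "i = Suc j" "j < k - 1" using i by (cases i) auto
        then show ?thesis using ll[of j] by simp
      qed
    qed
    moreover have "\<forall>i\<in>{1..<k}. nb k (D,As',Bs') i = t i"
    proof
      fix i assume "i \<in> {1..<k}"
      then obtain j where "i = Suc j" "j < k - 1" by (cases i) auto
      then show "nb k (D,As',Bs') i = t i" using ll[of j] by simp
    qed
    ultimately have "ap Bv \<eta> \<in> L" using km' ape by (simp add: L_def)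
    moreover have "ap Fv (ap Bv \<eta>) = \<eta>"
    proof -
      have "map (\<lambda>i. fst (Fv i (As' ! i, Bs' ! i))) [0..<k] = map (\<lambda>i. As ! i) [0..<k]"
        using FB nth' by (intro map_cong) auto
      moreover have "map (\<lambda>i. snd (Fv i (As' ! i, Bs' ! i))) [0..<k] = map (\<lambda>i. Bs ! i) [0..<k]"
        using FB nth' by (intro map_cong) auto
      ultimately show ?thesis using ape eta apD[of Fv D As' Bs'] map_nth_k[OF lens(1)] map_nth_k[OF lens(2)] by simp
    qed
    ultimately show ?thesis by simp
  qed
  have "bij_betw (ap Fv) L R"
    by (rule bij_betw_byWitness[where f' = "ap Bv"]) (use fL gR in blast)+
  then show ?thesis unfolding L_def R_def by blast
qed

end
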